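(* Let $G$ be a connected graph with $\lambda(G)=\sigma(G)=k\geq 1$. Then there exist vertex-disjoint connected graphs $G_1,G_2$ and a set $K$ of $k$ edges, each joining a vertex of $G_1$ to a vertex of $G_2$, such that $G=G_1\ast_K G_2$, and each $G_i$ satisfies exactly one of: (i) $G_i$ has one vertex and no edges; (ii) $k\leq\sigma(G_i)<\lambda(G_i)$; (iii) $k<\sigma(G_i)=\lambda(G_i)$; (iv) $\sigma(G_i)=\lambda(G_i)=k$.
   Context: Graphs may have multiple edges. $\lambda(H)$ is the edge connectivity of $H$ and $\sigma(H)$ the maximum number of pairwise edge-disjoint spanning trees of $H$. For vertex-disjoint graphs $G_1=(V_1,E_1)$, $G_2=(V_2,E_2)$ and a set $K$ of edges each with one end in $V_1$ and one in $V_2$, the $K$-join $G_1\ast_K G_2$ has vertex set $V_1\cup V_2$ and edge set $E_1\cup E_2\cup K$. *)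

theory Defs
  imports Main
begin

text \<open>Loopless multigraphs: a graph is a pair (V, E) of a vertex set and an edge set,
  together with an endpoint map ends :: 'e => 'v set shared by all graphs considered
  (so parallel edges are distinct elements of E with equal ends).\<close>

definition mgraph :: "('e \<Rightarrow> 'v set) \<Rightarrow> 'v set \<Rightarrow> 'e set \<Rightarrow> bool" where
  "mgraph ends V E \<longleftrightarrow> finite V \<and> finite E \<and>
     (\<forall>e\<in>E. ends e \<subseteq> V \<and> card (ends e) = 2)"

definition adj_rel :: "('e \<Rightarrow> 'v set) \<Rightarrow> 'e set \<Rightarrow> ('v \<times> 'v) set" where
  "adj_rel ends E = {(u, v). \<exists>e\<in>E. ends e = {u, v}}"

definition mconnected :: "('e \<Rightarrow> 'v set) \<Rightarrow> 'v set \<Rightarrow> 'e set \<Rightarrow> bool" where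
  "mconnected ends V E \<longleftrightarrow> V \<noteq> {} \<and>
     (\<forall>u\<in>V. \<forall>v\<in>V. (u, v) \<in> (adj_rel ends E)\<^sup>*)"

definition edge_conn :: "('e \<Rightarrow> 'v set) \<Rightarrow> 'v set \<Rightarrow> 'e set \<Rightarrow> nat" where
  "edge_conn ends V E =
     (if card V \<le> 1 then 0
      else (LEAST k. \<exists>F. F \<subseteq> E \<and> card F = k \<and> \<not> mconnected ends V (E - F)))"

definition spanning_tree :: "('e \<Rightarrow> 'v set) \<Rightarrow> 'v set \<Rightarrow> 'e set \<Rightarrow> 'e set \<Rightarrow> bool" where
  "spanning_tree ends V E T \<longleftrightarrow> T \<subseteq> E \<and> mconnected ends V T \<and>
     (\<forall>e\<in>T. \<not> mconnected ends V (T - {e}))"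

definition tree_pack :: "('e \<Rightarrow> 'v set) \<Rightarrow> 'v set \<Rightarrow> 'e set \<Rightarrow> nat" where
  "tree_pack ends V E =
     (GREATEST k. \<exists>T :: nat \<Rightarrow> 'e set.
        (\<forall>i<k. spanning_tree ends V E (T i)) \<and>
        (\<forall>i<k. \<forall>j<k. i \<noteq> j \<longrightarrow> T i \<inter> T j = {}))"

definition is_join :: "('e \<Rightarrow> 'v set) \<Rightarrow> 'v set \<Rightarrow> 'e set \<Rightarrow> 'v set \<Rightarrow> 'e set
     \<Rightarrow> 'v set \<Rightarrow> 'e set \<Rightarrow> 'e set \<Rightarrow> bool" where
  "is_join ends V E V1 E1 V2 E2 K \<longleftrightarrow>
     V1 \<inter> V2 = {} \<and>
     (\<forall>e\<in>K. \<exists>x\<in>V1. \<exists>y\<in>V2. ends e = {x, y}) \<and>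
     V = V1 \<union> V2 \<and> E = E1 \<union> E2 \<union> K"

end

theory Submission
  imports Defs
begin

definition cut :: "('e \<Rightarrow> 'v set) \<Rightarrow> 'e set \<Rightarrow> 'v set \<Rightarrow> 'e set" where
  "cut ends E S = {e\<in>E. ends e \<inter> S \<noteq> {} \<and> ends e - S \<noteq> {}}"

definition tfam :: "('e \<Rightarrow> 'v set) \<Rightarrow> 'v set \<Rightarrow> 'e set \<Rightarrow> nat \<Rightarrow> (nat \<Rightarrow> 'e set) \<Rightarrow> bool" where
  "tfam ends V E m T \<longleftrightarrow> (\<forall>i<m. spanning_tree ends V E (T i)) \<and>
        (\<forall>i<m. \<forall>j<m. i \<noteq> j \<longrightarrow> T i \<inter> T j = {})"

lemma tree_pack_alt: "tree_pack ends V E = (GREATEST m. \<exists>T. tfam ends V E m T)"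
  unfolding tree_pack_def tfam_def by simp

lemma adj_rel_mono: "E \<subseteq> E' \<Longrightarrow> adj_rel ends E \<subseteq> adj_rel ends E'"
  unfolding adj_rel_def by auto

lemma mconnected_mono: "mconnected ends V E \<Longrightarrow> E \<subseteq> E' \<Longrightarrow> mconnected ends V E'"
  unfolding mconnected_def using rtrancl_mono[OF adj_rel_mono] by blast

lemma adj_rel_sym: "sym (adj_rel ends E)"
  unfolding adj_rel_def sym_def by (auto simp: insert_commute)

lemma rtrancl_adj_sym: "(x,y) \<in> (adj_rel ends E)\<^sup>* \<Longrightarrow> (y,x) \<in> (adj_rel ends E)\<^sup>*"
  using sym_rtrancl[OF adj_rel_sym] by (meson symD)

lemma stays:
  assumes "(s,t) \<in> (adj_rel ends T)\<^sup>*" "s \<in> S"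
    "\<And>e a b. e \<in> T \<Longrightarrow> ends e = {a,b} \<Longrightarrow> a \<in> S \<Longrightarrow> b \<in> S"
  shows "t \<in> S"
  using assms(1,2)
proof (induction rule: rtrancl_induct)
  case base then show ?case .
next
  case (step y z)
  then obtain e where "e \<in> T" "ends e = {y,z}" unfolding adj_rel_def by auto
  with step assms(3) show ?case by blast
qed

lemma crossing:
  assumes "(s,t) \<in> (adj_rel ends T)\<^sup>*" "s \<in> S" "t \<notin> S"
  shows "\<exists>e\<in>T. \<exists>a b. ends e = {a,b} \<and> a \<in> S \<and> b \<notin> S"
  using stays[of s t ends T S] assms by blast

lemma adj_empty: "adj_rel ends {} = {}" unfolding adj_rel_def by auto

lemma two_elems:
  assumes "card V \<ge> 2" obtains u v where "u \<in> V" "v \<in> V" "u \<noteq> v"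
proof -
  have "finite V" using assms by (metis card.infinite not_numeral_le_zero)
  then have "\<not> card V \<le> Suc 0" using assms by simp
  then show ?thesis using that card_le_Suc0_iff_eq[OF \<open>finite V\<close>] by blast
qed

lemma conn_nonempty:
  assumes "mconnected ends V T" "card V \<ge> 2"
  shows "T \<noteq> {}"
proof
  assume "T = {}"
  obtain u v where "u \<in> V" "v \<in> V" "u \<noteq> v" using two_elems[OF assms(2)] by blast
  then have "(u,v) \<in> (adj_rel ends {})\<^sup>*" using assms(1) \<open>T = {}\<close> unfolding mconnected_def by blast
  then show False using \<open>u \<noteq> v\<close> unfolding adj_empty by simp
qed

lemma EC_le:
  assumes "card V \<ge> 2" "F \<subseteq> E" "\<not> mconnected ends V (E - F)"
  shows "edge_conn ends V E \<le> card F"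
  unfolding edge_conn_def using assms by (auto intro!: Least_le)

lemma EC_ex:
  assumes "card V \<ge> 2"
  obtains F where "F \<subseteq> E" "card F = edge_conn ends V E" "\<not> mconnected ends V (E - F)"
proof -
  let ?P = "\<lambda>k. \<exists>F. F \<subseteq> E \<and> card F = k \<and> \<not> mconnected ends V (E - F)"
  have ex: "?P (card E)"
    using conn_nonempty[OF _ assms, of ends "E - E"] by auto
  have eq: "edge_conn ends V E = (LEAST k. ?P k)"
    unfolding edge_conn_def using assms by simp
  from LeastI[of ?P, OF ex] obtain F where F: "F \<subseteq> E" "card F = (LEAST k. ?P k)"
      "\<not> mconnected ends V (E - F)" by blast
  show ?thesis
    by (rule that[OF F(1) _ F(3)]) (simp only: eq F(2))
qed

lemma TP_bound:
  assumes "mgraph ends V E" "card V \<ge> 2" "tfam ends V E m T"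
  shows "m \<le> card E"
proof -
  have ne: "\<forall>i<m. T i \<noteq> {} \<and> T i \<subseteq> E"
    using assms(3) conn_nonempty[OF _ assms(2)] unfolding tfam_def spanning_tree_def by blast
  define f where "f i = (SOME e. e \<in> T i)" for i
  have fT: "\<forall>i<m. f i \<in> T i" using ne unfolding f_def by (metis some_in_eq)
  have "inj_on f {..<m}"
  proof (rule inj_onI)
    fix i j assume "i \<in> {..<m}" "j \<in> {..<m}" "f i = f j"
    then show "i = j" using fT assms(3) unfolding tfam_def by (metis IntI empty_iff lessThan_iff)
  qed
  moreover have "f ` {..<m} \<subseteq> E" using fT ne by auto
  moreover have "finite E" using assms(1) unfolding mgraph_def by simp
  ultimately have "card {..<m} \<le> card E" by (rule card_inj_on_le)
  then show ?thesis by simp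
qed

lemma TP_ex:
  assumes "mgraph ends V E" "card V \<ge> 2"
  shows "\<exists>T. tfam ends V E (tree_pack ends V E) T"
  unfolding tree_pack_alt
  by (rule GreatestI_nat[where k=0 and b="card E"])
     (auto simp: tfam_def intro: TP_bound[OF assms])

lemma TP_ge:
  assumes "mgraph ends V E" "card V \<ge> 2" "tfam ends V E m T"
  shows "m \<le> tree_pack ends V E"
  unfolding tree_pack_alt
  by (rule Greatest_le_nat[where b="card E"]) (use assms TP_bound[OF assms(1,2)] in blast)+

lemma SL:
  assumes "mgraph ends V E" "card V \<ge> 2"
  shows "tree_pack ends V E \<le> edge_conn ends V E"
proof -
  obtain T where T: "tfam ends V E (tree_pack ends V E) T" using TP_ex[OF assms] by blast
  obtain F where F: "F \<subseteq> E" "card F = edge_conn ends V E" "\<not> mconnected ends V (E - F)"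
    by (rule EC_ex[OF assms(2)])
  let ?m = "tree_pack ends V E"
  have meet: "\<forall>i<?m. T i \<inter> F \<noteq> {}"
  proof (intro allI impI)
    fix i assume "i < ?m"
    then have "T i \<subseteq> E" "mconnected ends V (T i)" using T unfolding tfam_def spanning_tree_def by auto
    then show "T i \<inter> F \<noteq> {}" using F(3) mconnected_mono[of ends V "T i" "E - F"] by blast
  qed
  define f where "f i = (SOME e. e \<in> T i \<inter> F)" for i
  have fT: "\<forall>i<?m. f i \<in> T i \<inter> F" using meet unfolding f_def by (metis some_in_eq)
  have "inj_on f {..<?m}"
  proof (rule inj_onI)
    fix i j assume "i \<in> {..<?m}" "j \<in> {..<?m}" "f i = f j"
    then show "i = j" using fT T unfolding tfam_def by (metis IntI IntD1 empty_iff lessThan_iff)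
  qed
  moreover have "f ` {..<?m} \<subseteq> F" using fT by auto
  moreover have "finite F" using assms(1) F(1) unfolding mgraph_def by (meson finite_subset)
  ultimately have "card {..<?m} \<le> card F" by (rule card_inj_on_le)
  then show ?thesis using F(2) by simp
qed

lemma CL:
  assumes "mgraph ends V E" "S \<subseteq> V" "s \<in> S" "t \<in> V" "t \<notin> S"
  shows "\<not> mconnected ends V (E - cut ends E S)"
proof
  assume "mconnected ends V (E - cut ends E S)"
  then have "(s,t) \<in> (adj_rel ends (E - cut ends E S))\<^sup>*" using assms unfolding mconnected_def by blast
  then have "t \<in> S" using assms(3) by (rule stays) (auto simp: cut_def)
  then show False using assms(5) by simp
qed

lemma min_tree:
  assumes "finite T" "mconnected ends W T"
  shows "\<exists>T'\<subseteq>T. mconnected ends W T' \<and> (\<forall>e\<in>T'. \<not> mconnected ends W (T' - {e}))"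
  using assms
proof (induction "card T" arbitrary: T rule: less_induct)
  case less
  show ?case
  proof (cases "\<forall>e\<in>T. \<not> mconnected ends W (T - {e})")
    case True then show ?thesis using less by blast
  next
    case False
    then obtain e where e: "e \<in> T" "mconnected ends W (T - {e})" by blast
    have "card (T - {e}) < card T" using e less(2) by (meson card_Diff1_less)
    then obtain T' where "T' \<subseteq> T - {e}" "mconnected ends W T'" "\<forall>e\<in>T'. \<not> mconnected ends W (T' - {e})"
      using less e by blast
    then show ?thesis by blast
  qed
qed

lemma restrict:
  assumes "mconnected ends V T" "W \<subseteq> V" "W \<noteq> {}"
    "finite T" "card (cut ends T W) \<le> 1"
  shows "mconnected ends W {e\<in>T. ends e \<subseteq> W}"
proof (rule ccontr)
  let ?TW = "{e\<in>T. ends e \<subseteq> W}"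
  assume "\<not> mconnected ends W ?TW"
  then obtain w x where wx: "w \<in> W" "x \<in> W" "(w,x) \<notin> (adj_rel ends ?TW)\<^sup>*"
    using assms(3) unfolding mconnected_def by blast
  define A where "A = {y\<in>W. (w,y) \<in> (adj_rel ends ?TW)\<^sup>*}"
  have wA: "w \<in> A" using wx unfolding A_def by simp
  have xA: "x \<notin> A" using wx unfolding A_def by simp
  have "(w,x) \<in> (adj_rel ends T)\<^sup>*" using assms(1,2) wx unfolding mconnected_def by blast
  then obtain e a b where e: "e \<in> T" "ends e = {a,b}" "a \<in> A" "b \<notin> A"
    using crossing[of w x ends T A] wA xA by blast
  have bW: "b \<notin> W"
  proof
    assume "b \<in> W"
    then have "e \<in> ?TW" using e A_def by auto
    then have "(a,b) \<in> adj_rel ends ?TW" using e unfolding adj_rel_def by auto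
    then show False using e \<open>b \<in> W\<close> unfolding A_def by (auto intro: rtrancl_into_rtrancl)
  qed
  have "(x,w) \<in> (adj_rel ends T)\<^sup>*" using assms(1,2) wx unfolding mconnected_def by blast
  then obtain e' a' b' where e': "e' \<in> T" "ends e' = {a',b'}" "a' \<in> W - A" "b' \<notin> W - A"
    using crossing[of x w ends T "W - A"] wA xA wx by blast
  have b'W: "b' \<notin> W"
  proof
    assume "b' \<in> W"
    then have "b' \<in> A" using e' by blast
    then have "e' \<in> ?TW" using e' A_def by auto
    then have "(b',a') \<in> adj_rel ends ?TW" using e' unfolding adj_rel_def by auto
    then show False using e' \<open>b' \<in> A\<close> unfolding A_def by (auto intro: rtrancl_into_rtrancl)
  qed
  have "e \<noteq> e'"
  proof
    assume "e = e'"
    then have "a' \<in> {a,b}" using e e' by auto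
    then show False using e' bW e(3) by auto
  qed
  moreover have "e \<in> cut ends T W" "e' \<in> cut ends T W"
    using e e' bW b'W A_def unfolding cut_def by auto
  ultimately have "card {e,e'} \<le> card (cut ends T W)"
    using assms(4) by (intro card_mono) (auto simp: cut_def)
  then show False using \<open>e \<noteq> e'\<close> assms(5) by simp
qed


definition good :: "('e \<Rightarrow> 'v set) \<Rightarrow> nat \<Rightarrow> 'v set \<Rightarrow> 'e set \<Rightarrow> bool" where
  "good ends k Vi Ei \<longleftrightarrow> (card Vi = 1 \<and> Ei = {}) \<or>
        (card Vi \<ge> 2 \<and>
          ((k \<le> tree_pack ends Vi Ei \<and> tree_pack ends Vi Ei < edge_conn ends Vi Ei) \<or>
           (k < tree_pack ends Vi Ei \<and> tree_pack ends Vi Ei = edge_conn ends Vi Ei) \<or>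
           (tree_pack ends Vi Ei = k \<and> edge_conn ends Vi Ei = k)))"

lemma two_ends:
  assumes "card S = 2" "a \<in> S" "b \<in> S" "a \<noteq> b"
  shows "S = {a,b}"
  using assms by (auto simp: card_2_iff)

lemma side_trees:
  assumes "mgraph ends V E" "tfam ends V E k T" "W \<subseteq> V" "W \<noteq> {}"
    "\<forall>j<k. card (cut ends (T j) W) \<le> 1"
  shows "\<exists>T'. tfam ends W {e\<in>E. ends e \<subseteq> W} k T'"
    and "k \<ge> 1 \<Longrightarrow> mconnected ends W {e\<in>E. ends e \<subseteq> W}"
proof -
  have finE: "finite E" using assms(1) unfolding mgraph_def by simp
  have Tj: "\<And>j. j < k \<Longrightarrow> T j \<subseteq> E \<and> mconnected ends V (T j)"
    using assms(2) unfolding tfam_def spanning_tree_def by blast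
  have R: "\<And>j. j < k \<Longrightarrow> mconnected ends W {e\<in>T j. ends e \<subseteq> W}"
  proof -
    fix j assume "j < k"
    then show "mconnected ends W {e\<in>T j. ends e \<subseteq> W}"
      using restrict[of ends V "T j" W] Tj[of j] assms(3,4,5) finE finite_subset by blast
  qed
  show "k \<ge> 1 \<Longrightarrow> mconnected ends W {e\<in>E. ends e \<subseteq> W}"
  proof -
    assume "k \<ge> 1"
    then have "mconnected ends W {e\<in>T 0. ends e \<subseteq> W}" using R by simp
    moreover have "{e\<in>T 0. ends e \<subseteq> W} \<subseteq> {e\<in>E. ends e \<subseteq> W}" using Tj[of 0] \<open>k \<ge> 1\<close> by auto
    ultimately show ?thesis by (rule mconnected_mono)
  qed
  define T' where "T' j = (SOME S. S \<subseteq> {e\<in>T j. ends e \<subseteq> W} \<and> mconnected ends W S \<and>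
      (\<forall>e\<in>S. \<not> mconnected ends W (S - {e})))" for j
  have T': "\<And>j. j < k \<Longrightarrow> T' j \<subseteq> {e\<in>T j. ends e \<subseteq> W} \<and> mconnected ends W (T' j) \<and>
      (\<forall>e\<in>T' j. \<not> mconnected ends W (T' j - {e}))"
  proof -
    fix j assume "j < k"
    have "finite {e\<in>T j. ends e \<subseteq> W}" using Tj[OF \<open>j < k\<close>] finE finite_subset by fastforce
    from min_tree[OF this R[OF \<open>j < k\<close>]]
    show "T' j \<subseteq> {e\<in>T j. ends e \<subseteq> W} \<and> mconnected ends W (T' j) \<and>
      (\<forall>e\<in>T' j. \<not> mconnected ends W (T' j - {e}))"
      unfolding T'_def by (rule someI_ex)
  qed
  have "tfam ends W {e\<in>E. ends e \<subseteq> W} k T'"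
    unfolding tfam_def spanning_tree_def
  proof (intro conjI allI impI)
    fix i assume "i < k"
    then show "T' i \<subseteq> {e\<in>E. ends e \<subseteq> W}" using T'[of i] Tj[of i] by auto
    show "mconnected ends W (T' i)" using T'[OF \<open>i < k\<close>] by blast
    show "\<forall>e\<in>T' i. \<not> mconnected ends W (T' i - {e})" using T'[OF \<open>i < k\<close>] by blast
  next
    fix i j assume "i < k" "j < k" "i \<noteq> j"
    then have "T i \<inter> T j = {}" using assms(2) unfolding tfam_def by blast
    then show "T' i \<inter> T' j = {}" using T'[OF \<open>i < k\<close>] T'[OF \<open>j < k\<close>] by blast
  qed
  then show "\<exists>T'. tfam ends W {e\<in>E. ends e \<subseteq> W} k T'" by blast
qed

lemma side_concl:
  assumes "mgraph ends V E" "W \<subseteq> V" "W \<noteq> {}" "tfam ends W {e\<in>E. ends e \<subseteq> W} k T'"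
  shows "good ends k W {e\<in>E. ends e \<subseteq> W}"
proof (cases "card W = 1")
  case True
  have "{e\<in>E. ends e \<subseteq> W} = {}"
  proof (rule ccontr)
    assume "{e\<in>E. ends e \<subseteq> W} \<noteq> {}"
    then obtain e where "e \<in> E" "ends e \<subseteq> W" by blast
    then have "card (ends e) = 2" using assms(1) unfolding mgraph_def by blast
    moreover have "card (ends e) \<le> card W" using \<open>ends e \<subseteq> W\<close> True
      by (metis card.infinite card_mono zero_neq_one)
    ultimately show False using True by simp
  qed
  then show ?thesis using True by (simp add: good_def)
next
  case False
  have finW: "finite W" using assms(1,2) unfolding mgraph_def by (meson finite_subset)
  then have "card W \<noteq> 0" using assms(3) by simp
  then have cW: "card W \<ge> 2" using False by linarith
  have mg: "mgraph ends W {e\<in>E. ends e \<subseteq> W}" using assms(1) finW unfolding mgraph_def by auto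
  have "k \<le> tree_pack ends W {e\<in>E. ends e \<subseteq> W}" by (rule TP_ge[OF mg cW assms(4)])
  moreover have "tree_pack ends W {e\<in>E. ends e \<subseteq> W} \<le> edge_conn ends W {e\<in>E. ends e \<subseteq> W}"
    by (rule SL[OF mg cW])
  ultimately show ?thesis using cW unfolding good_def by linarith
qed

theorem mainTheorem6:
  fixes ends :: "'e \<Rightarrow> 'v set" and V :: "'v set" and E :: "'e set" and k :: nat
  assumes "mgraph ends V E"
    and "mconnected ends V E"
    and "edge_conn ends V E = k" and "tree_pack ends V E = k" and "k \<ge> 1"
  shows "\<exists>V1 E1 V2 E2 K.
     mgraph ends V1 E1 \<and> mgraph ends V2 E2 \<and>
     mconnected ends V1 E1 \<and> mconnected ends V2 E2 \<and>
     card K = k \<and> is_join ends V E V1 E1 V2 E2 K \<and>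
     (\<forall>(Vi, Ei) \<in> {(V1, E1), (V2, E2)}.
        (card Vi = 1 \<and> Ei = {}) \<or>
        (card Vi \<ge> 2 \<and>
          ((k \<le> tree_pack ends Vi Ei \<and> tree_pack ends Vi Ei < edge_conn ends Vi Ei) \<or>
           (k < tree_pack ends Vi Ei \<and> tree_pack ends Vi Ei = edge_conn ends Vi Ei) \<or>
           (tree_pack ends Vi Ei = k \<and> edge_conn ends Vi Ei = k))))"
proof -
  have finV: "finite V" and finE: "finite E"
    and ends: "\<And>e. e \<in> E \<Longrightarrow> ends e \<subseteq> V \<and> card (ends e) = 2"
    using assms(1) unfolding mgraph_def by auto
  have cV: "card V \<ge> 2"
  proof (rule ccontr)
    assume "\<not> card V \<ge> 2"
    then have "edge_conn ends V E = 0" unfolding edge_conn_def by simp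
    then show False using assms(3,5) by simp
  qed
  obtain F where F: "F \<subseteq> E" "card F = edge_conn ends V E" "\<not> mconnected ends V (E - F)"
    by (rule EC_ex[OF cV])
  have "V \<noteq> {}" using assms(2) unfolding mconnected_def by simp
  then obtain u v where uv: "u \<in> V" "v \<in> V" "(u,v) \<notin> (adj_rel ends (E - F))\<^sup>*"
    using F(3) unfolding mconnected_def by blast
  define V1 where "V1 = {x\<in>V. (u,x) \<in> (adj_rel ends (E - F))\<^sup>*}"
  define V2 where "V2 = V - V1"
  define E1 where "E1 = {e\<in>E. ends e \<subseteq> V1}"
  define E2 where "E2 = {e\<in>E. ends e \<subseteq> V2}"
  define K where "K = cut ends E V1"
  have uV1: "u \<in> V1" using uv V1_def by simp
  have vV2: "v \<in> V2" using uv V1_def V2_def by simp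
  have V1V: "V1 \<subseteq> V" and V2V: "V2 \<subseteq> V" using V1_def V2_def by auto
  have KF: "K \<subseteq> F"
  proof
    fix e assume "e \<in> K"
    then have eE: "e \<in> E" and m1: "ends e \<inter> V1 \<noteq> {}" and m2: "ends e - V1 \<noteq> {}"
      unfolding K_def cut_def by auto
    then obtain a b where a: "a \<in> ends e" "a \<in> V1" and b: "b \<in> ends e" "b \<notin> V1" by blast
    have ab: "ends e = {a,b}" using two_ends[of "ends e" a b] ends[OF eE] a b by blast
    show "e \<in> F"
    proof (rule ccontr)
      assume "e \<notin> F"
      then have ab': "(a,b) \<in> adj_rel ends (E - F)" using eE ab unfolding adj_rel_def by blast
      have "(u,a) \<in> (adj_rel ends (E - F))\<^sup>*" using a V1_def by simp
      then have "(u,b) \<in> (adj_rel ends (E - F))\<^sup>*" using ab' by (rule rtrancl_into_rtrancl)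
      moreover have "b \<in> V" using ends[OF eE] b by blast
      ultimately show False using b V1_def by simp
    qed
  qed
  have finF: "finite F" using F(1) finE finite_subset by blast
  have KE: "K \<subseteq> E" unfolding K_def cut_def by auto
  have Kdisc: "\<not> mconnected ends V (E - K)"
    unfolding K_def by (rule CL[OF assms(1) V1V uV1]) (use uv vV2 V2_def in auto)
  have cK: "card K = k"
  proof (rule antisym)
    show "card K \<le> k" using card_mono[OF finF KF] F(2) assms(3) by simp
    show "k \<le> card K" using EC_le[OF cV KE Kdisc] assms(3) by simp
  qed
  have finK: "finite K" using KE finE finite_subset by blast
  obtain T where T: "tfam ends V E k T" using TP_ex[OF assms(1) cV] assms(4) by metis
  have Tj: "\<And>j. j < k \<Longrightarrow> T j \<subseteq> E \<and> mconnected ends V (T j)"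
    using T unfolding tfam_def spanning_tree_def by blast
  have meet: "\<And>j. j < k \<Longrightarrow> card (T j \<inter> K) \<ge> 1"
  proof -
    fix j assume "j < k"
    have "T j \<inter> K \<noteq> {}"
    proof
      assume "T j \<inter> K = {}"
      then have "T j \<subseteq> E - K" using Tj[OF \<open>j < k\<close>] by blast
      then show False using Kdisc Tj[OF \<open>j < k\<close>] mconnected_mono by blast
    qed
    then show "card (T j \<inter> K) \<ge> 1" using finK
      by (metis One_nat_def Suc_leI card_gt_0_iff finite_Int)
  qed
  have sumeq: "card (\<Union>j<k. T j \<inter> K) = (\<Sum>j<k. card (T j \<inter> K))"
    by (rule card_UN_disjoint) (use finK T in \<open>auto simp: tfam_def\<close>)
  have "card (\<Union>j<k. T j \<inter> K) \<le> card K" by (rule card_mono[OF finK]) auto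
  then have sumle: "(\<Sum>j<k. card (T j \<inter> K)) \<le> k" using sumeq cK by simp
  have one: "\<forall>j<k. card (T j \<inter> K) \<le> 1"
  proof (intro allI impI)
    fix j assume "j < k"
    have "(\<Sum>i<k. card (T i \<inter> K)) = card (T j \<inter> K) + (\<Sum>i\<in>{..<k} - {j}. card (T i \<inter> K))"
      using \<open>j < k\<close> by (simp add: sum.remove)
    moreover have "(\<Sum>i\<in>{..<k} - {j}. card (T i \<inter> K)) \<ge> (\<Sum>i\<in>{..<k} - {j}. 1)"
      by (rule sum_mono) (use meet in auto)
    moreover have "(\<Sum>i\<in>{..<k} - {j}. (1::nat)) = k - 1" using \<open>j < k\<close> by simp
    ultimately show "card (T j \<inter> K) \<le> 1" using sumle \<open>j < k\<close> by linarith
  qed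
  have cut1: "\<And>j. j < k \<Longrightarrow> cut ends (T j) V1 = T j \<inter> K"
    using Tj unfolding K_def cut_def by auto
  have cut2: "\<And>j. j < k \<Longrightarrow> cut ends (T j) V2 = T j \<inter> K"
  proof -
    fix j assume "j < k"
    have eq: "\<And>e. e \<in> T j \<Longrightarrow> (ends e \<inter> V2 \<noteq> {} \<and> ends e - V2 \<noteq> {}) = (ends e \<inter> V1 \<noteq> {} \<and> ends e - V1 \<noteq> {})"
    proof -
      fix e assume "e \<in> T j"
      then have "ends e \<subseteq> V" using Tj[OF \<open>j < k\<close>] ends by blast
      then show "(ends e \<inter> V2 \<noteq> {} \<and> ends e - V2 \<noteq> {}) = (ends e \<inter> V1 \<noteq> {} \<and> ends e - V1 \<noteq> {})"
        unfolding V2_def by blast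
    qed
    have "cut ends (T j) V2 = {e\<in>T j. ends e \<inter> V1 \<noteq> {} \<and> ends e - V1 \<noteq> {}}"
      unfolding cut_def using eq by blast
    also have "\<dots> = T j \<inter> K" using Tj[OF \<open>j < k\<close>] unfolding K_def cut_def by blast
    finally show "cut ends (T j) V2 = T j \<inter> K" .
  qed
  have s1: "\<forall>j<k. card (cut ends (T j) V1) \<le> 1" using one cut1 by simp
  have s2: "\<forall>j<k. card (cut ends (T j) V2) \<le> 1" using one cut2 by simp
  have V1ne: "V1 \<noteq> {}" using uV1 by blast
  have V2ne: "V2 \<noteq> {}" using vV2 by blast
  obtain T1 where T1: "tfam ends V1 E1 k T1"
    using side_trees(1)[OF assms(1) T V1V V1ne s1] unfolding E1_def by blast
  obtain T2 where T2: "tfam ends V2 E2 k T2"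
    using side_trees(1)[OF assms(1) T V2V V2ne s2] unfolding E2_def by blast
  have c1: "mconnected ends V1 E1"
    using side_trees(2)[OF assms(1) T V1V V1ne s1 assms(5)] unfolding E1_def .
  have c2: "mconnected ends V2 E2"
    using side_trees(2)[OF assms(1) T V2V V2ne s2 assms(5)] unfolding E2_def .
  have Kab: "\<And>e. e \<in> K \<Longrightarrow> \<exists>a\<in>V1. \<exists>b\<in>V2. ends e = {a,b}"
  proof -
    fix e assume "e \<in> K"
    then have eE: "e \<in> E" and m1: "ends e \<inter> V1 \<noteq> {}" and m2: "ends e - V1 \<noteq> {}"
      unfolding K_def cut_def by auto
    then obtain a b where a: "a \<in> ends e" "a \<in> V1" and b: "b \<in> ends e" "b \<notin> V1" by blast
    have ab: "ends e = {a,b}" using two_ends[of "ends e" a b] ends[OF eE] a b by blast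
    have "b \<in> V2" using ends[OF eE] b V2_def by blast
    then show "\<exists>a\<in>V1. \<exists>b\<in>V2. ends e = {a,b}" using a ab by blast
  qed
  have join: "is_join ends V E V1 E1 V2 E2 K"
    unfolding is_join_def
  proof (intro conjI)
    show "V1 \<inter> V2 = {}" using V2_def by auto
    show "\<forall>e\<in>K. \<exists>x\<in>V1. \<exists>y\<in>V2. ends e = {x, y}" using Kab by blast
    show "V = V1 \<union> V2" using V1V V2_def by auto
    show "E = E1 \<union> E2 \<union> K"
    proof
      show "E1 \<union> E2 \<union> K \<subseteq> E" unfolding E1_def E2_def using KE by blast
      show "E \<subseteq> E1 \<union> E2 \<union> K"
      proof
        fix e assume eE: "e \<in> E"
        then have "ends e \<subseteq> V" using ends by blast
        then show "e \<in> E1 \<union> E2 \<union> K"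
          using eE unfolding E1_def E2_def K_def cut_def V2_def by blast
      qed
    qed
  qed
  have mg1: "mgraph ends V1 E1" unfolding mgraph_def
  proof (intro conjI)
    show "finite V1" using finite_subset[OF V1V finV] .
    show "finite E1" using finE unfolding E1_def by simp
    show "\<forall>e\<in>E1. ends e \<subseteq> V1 \<and> card (ends e) = 2" using ends unfolding E1_def by blast
  qed
  have mg2: "mgraph ends V2 E2" unfolding mgraph_def
  proof (intro conjI)
    show "finite V2" using finite_subset[OF V2V finV] .
    show "finite E2" using finE unfolding E2_def by simp
    show "\<forall>e\<in>E2. ends e \<subseteq> V2 \<and> card (ends e) = 2" using ends unfolding E2_def by blast
  qed
  have p1: "good ends k V1 E1"
    using side_concl[OF assms(1) V1V V1ne T1[unfolded E1_def]] unfolding E1_def .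
  have p2: "good ends k V2 E2"
    using side_concl[OF assms(1) V2V V2ne T2[unfolded E2_def]] unfolding E2_def .
  have all: "\<forall>(Vi, Ei) \<in> {(V1, E1), (V2, E2)}. good ends k Vi Ei" using p1 p2 by simp
  show ?thesis
    unfolding good_def[symmetric]
    using mg1 mg2 c1 c2 cK join all by blast
qed

end
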